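(* Let $n\ge 1$, let $f:\mathbb{R}^n\to\mathbb{R}$ be a measurable symmetric function, let $\mathbf F,\mathbf G\in\mathcal M^n$, let $\lambda\in[0,1]$ and let $\pi$ be a permutation of $\{1,\dots,n\}$. Then: (i) $\mathcal D_f(\mathbf F)=\mathcal D_f(\pi(\mathbf F))$; (ii) $\lambda\mathcal D_f(\mathbf F)+(1-\lambda)\mathcal D_f(\mathbf G)\subset \mathcal D_f(\lambda\mathbf F+(1-\lambda)\mathbf G)$. In particular, (a) $\lambda\mathcal D_f(\mathbf F)+(1-\lambda)\mathcal D_f(\mathbf F)=\mathcal D_f(\mathbf F)$, and (b) $\mathcal D_f(\mathbf F)\cap\mathcal D_f(\mathbf G)\subset \mathcal D_f(\lambda\mathbf F+(1-\lambda)\mathbf G)$.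
   Context: Work on an atomless probability space $(\Omega,\mathcal F,\mathbb P)$. $\mathcal M$ denotes the set of cumulative distribution functions (cdfs) on $\mathbb{R}$ (identified with probability measures on $\mathcal B(\mathbb{R})$); $X\sim F$ means $X$ has cdf $F$. A function $f:\mathbb{R}^n\to\mathbb{R}$ is symmetric if $f(\mathbf x)=f(\pi(\mathbf x))$ for every $\mathbf x$ and every permutation $\pi$ of coordinates. For $\mathbf F=(F_1,\dots,F_n)\in\mathcal M^n$, the $f$-aggregation set is $\mathcal D_f(\mathbf F)=\{\text{cdf of } f(X_1,\dots,X_n): X_i\sim F_i,\ i=1,\dots,n\}$. $\pi(\mathbf F)$ is the tuple with components permuted by $\pi$. For $\mathbf F,\mathbf G\in\mathcal M^n$, $\lambda\mathbf F+(1-\lambda)\mathbf G$ is the tuple $(\lambda F_i+(1-\lambda)G_i)_{i=1}^n$ (componentwise mixture of cdfs). For sets $A,B\subset\mathcal M$, $\lambda A+(1-\lambda)B=\{\lambda H+(1-\lambda)H': H\in A, H'\in B\}$. *)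

theory Defs
  imports "HOL-Probability.Probability"
begin

definition atomless :: "'a measure \<Rightarrow> bool" where
  "atomless P \<longleftrightarrow> (\<forall>A\<in>sets P. measure P A > 0 \<longrightarrow>
      (\<exists>B\<in>sets P. B \<subseteq> A \<and> 0 < measure P B \<and> measure P B < measure P A))"

definition is_cdf :: "(real \<Rightarrow> real) \<Rightarrow> bool" where
  "is_cdf F \<longleftrightarrow> (\<exists>\<mu>. real_distribution \<mu> \<and> F = cdf \<mu>)"

definition symmetric_fun :: "(real^'n \<Rightarrow> real) \<Rightarrow> bool" where
  "symmetric_fun f \<longleftrightarrow> (\<forall>x \<pi>. bij \<pi> \<longrightarrow> f (\<chi> i. x $ \<pi> i) = f x)"

definition agg_set :: "'a measure \<Rightarrow> (real^'n \<Rightarrow> real) \<Rightarrow> ('n \<Rightarrow> real \<Rightarrow> real) \<Rightarrow> (real \<Rightarrow> real) set" where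
  "agg_set P f F = {cdf (distr P borel (\<lambda>\<omega>. f (\<chi> i. X i \<omega>))) | X.
      (\<forall>i. X i \<in> borel_measurable P \<and> cdf (distr P borel (X i)) = F i)}"

definition mix_tuple :: "real \<Rightarrow> ('n \<Rightarrow> real \<Rightarrow> real) \<Rightarrow> ('n \<Rightarrow> real \<Rightarrow> real) \<Rightarrow> ('n \<Rightarrow> real \<Rightarrow> real)" where
  "mix_tuple l F G = (\<lambda>i x. l * F i x + (1 - l) * G i x)"

definition mix_set :: "real \<Rightarrow> (real \<Rightarrow> real) set \<Rightarrow> (real \<Rightarrow> real) set \<Rightarrow> (real \<Rightarrow> real) set" where
  "mix_set l A B = {(\<lambda>x. l * H x + (1 - l) * H' x) | H H'. H \<in> A \<and> H' \<in> B}"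

end

theory Submission
  imports Defs
begin
lemma measurable_vecI:
  fixes h :: "'b \<Rightarrow> real^'n"
  assumes "\<And>i. (\<lambda>\<omega>. h \<omega> $ i) \<in> borel_measurable M"
  shows "h \<in> borel_measurable M"
proof (subst borel_measurable_euclidean_space, intro ballI)
  fix b :: "real^'n" assume "b \<in> Basis"
  then obtain i where b: "b = axis i 1" by (auto simp: Basis_vec_def)
  have "(\<lambda>x. h x \<bullet> b) = (\<lambda>x. h x $ i)" by (simp add: b inner_axis)
  then show "(\<lambda>x. h x \<bullet> b) \<in> borel_measurable M" using assms by simp
qed

lemma measurable_vec_nth[measurable]: "(\<lambda>x::real^'n. x $ i) \<in> borel_measurable borel"
  by (intro borel_measurable_continuous_onI continuous_intros)

definition hh :: "real \<Rightarrow> real" where "hh x = arctan x / pi + 1/2"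
definition hinv :: "real \<Rightarrow> real" where "hinv y = tan (pi * (y - 1/2))"
definition dig :: "nat \<Rightarrow> real \<Rightarrow> real" where
  "dig k t = of_int \<lfloor>2^(k+1)*t\<rfloor> - 2 * of_int \<lfloor>2^k*t\<rfloor>"
definition dig4 :: "nat \<Rightarrow> real \<Rightarrow> real" where
  "dig4 k t = of_int \<lfloor>4^(k+1)*t\<rfloor> - 4 * of_int \<lfloor>4^k*t\<rfloor>"

lemma hh_bounds: "0 < hh x" "hh x < 1"
proof -
  have "- (pi/2) < arctan x" "arctan x < pi/2" by (rule arctan_lbound, rule arctan_ubound)
  then have "-1/2 < arctan x / pi" "arctan x / pi < 1/2" using pi_gt_zero
    by (simp_all add: field_simps)
  then show "0 < hh x" "hh x < 1" unfolding hh_def by linarith+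
qed

lemma hinv_hh: "hinv (hh x) = x"
  by (simp add: hinv_def hh_def tan_arctan)

lemma hh_measurable[measurable]: "hh \<in> borel_measurable borel"
  unfolding hh_def by (intro borel_measurable_continuous_onI continuous_intros) auto

lemma hinv_measurable[measurable]: "hinv \<in> borel_measurable borel"
  unfolding hinv_def tan_def by (measurable; simp)

lemma dig_measurable[measurable]: "dig k \<in> borel_measurable borel"
  unfolding dig_def by measurable

lemma dig4_measurable[measurable]: "dig4 k \<in> borel_measurable borel"
  unfolding dig4_def by measurable

lemma dig_01: "dig k t \<in> {0,1}"
proof -
  let ?y = "2^k*t :: real"
  have eq: "2^(k+1)*t = 2 * ?y" by simp
  have a: "of_int \<lfloor>?y\<rfloor> \<le> ?y" "?y < of_int \<lfloor>?y\<rfloor> + 1" by linarith+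
  have b: "of_int \<lfloor>2*?y\<rfloor> \<le> 2*?y" "2*?y < of_int \<lfloor>2*?y\<rfloor> + 1" by linarith+
  have "\<lfloor>2*?y\<rfloor> - 2*\<lfloor>?y\<rfloor> \<ge> 0" "\<lfloor>2*?y\<rfloor> - 2*\<lfloor>?y\<rfloor> \<le> 1"
    using a b by linarith+
  then have "\<lfloor>2*?y\<rfloor> - 2*\<lfloor>?y\<rfloor> = 0 \<or> \<lfloor>2*?y\<rfloor> - 2*\<lfloor>?y\<rfloor> = 1" by linarith
  moreover have "dig k t = of_int (\<lfloor>2*?y\<rfloor> - 2*\<lfloor>?y\<rfloor>)" unfolding dig_def eq by simp
  ultimately show ?thesis by auto
qed

lemma bin_sums:
  assumes "0 \<le> t" "t < 1"
  shows "(\<lambda>k. dig k t / 2^(k+1)) sums t"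
proof -
  define a where "a m = (of_int \<lfloor>2^m*t\<rfloor> / 2^m :: real)" for m :: nat
  have tm: "dig k t / 2^(k+1) = a (Suc k) - a k" for k
    by (simp add: dig_def a_def field_simps)
  have "\<lfloor>t\<rfloor> = 0" using assms by (simp add: floor_eq_iff)
  then have a0: "a 0 = 0" by (simp add: a_def)
  have part: "(\<Sum>k<m. dig k t / 2^(k+1)) = a m" for m
  proof -
    have "(\<Sum>k<m. dig k t / 2^(k+1)) = (\<Sum>k<m. a (Suc k) - a k)"
      by (intro sum.cong refl tm)
    also have "\<dots> = a m" by (simp add: sum_lessThan_telescope a0)
    finally show ?thesis .
  qed
  have lo: "t - (1/2)^m \<le> a m" for m
  proof -
    have "2^m*t < of_int \<lfloor>2^m*t\<rfloor> + 1" by linarith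
    then have "2^m*t - 1 \<le> of_int \<lfloor>2^m*t\<rfloor>" by linarith
    then have "(2^m*t - 1)/2^m \<le> a m" unfolding a_def by (simp add: divide_right_mono)
    then show ?thesis by (simp add: field_simps power_divide)
  qed
  have hi: "a m \<le> t" for m
  proof -
    have "of_int \<lfloor>2^m*t\<rfloor> \<le> 2^m*t" by linarith
    then show ?thesis unfolding a_def by (simp add: field_simps)
  qed
  have "(\<lambda>m. t - (1/2)^m) \<longlonglongrightarrow> t - 0"
    by (intro tendsto_diff tendsto_const LIMSEQ_realpow_zero) auto
  then have l1: "(\<lambda>m. t - (1/2)^m) \<longlonglongrightarrow> t" by simp
  have "a \<longlonglongrightarrow> t"
    by (rule tendsto_sandwich[OF always_eventually always_eventually l1 tendsto_const])
       (use lo hi in auto)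
  then show ?thesis unfolding sums_def part .
qed

lemma base4:
  fixes b :: "nat \<Rightarrow> real"
  assumes b01: "\<And>k. b k \<in> {0,1}"
  shows "dig4 k (\<Sum>j. b j / 4^(j+1)) = b k"
proof -
  have bnn: "0 \<le> b j" "b j \<le> 1" for j using b01[of j] by auto
  have geo: "(\<lambda>j. (1/4::real)^j) sums (4/3)"
    using geometric_sums[of "1/4::real"] by simp
  then have geo4: "(\<lambda>j. 1 / 4^(j+1) :: real) sums (1/3)"
    using sums_mult[OF geo, of "1/4"] by (simp add: power_divide)
  have sm: "summable (\<lambda>j. b j / 4^(j+1))"
    by (rule summable_comparison_test[OF _ sums_summable[OF geo4]])
       (use bnn in \<open>auto intro!: exI[of _ 0] divide_right_mono\<close>)
  define s where "s = (\<Sum>j. b j / 4^(j+1))"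
  define S where "S m = (\<Sum>j<m. b j / 4^(j+1))" for m
  have Sint: "4^m * S m \<in> \<int>" for m
  proof (induction m)
    case 0 then show ?case by (simp add: S_def)
  next
    case (Suc m)
    have "4^Suc m * S (Suc m) = 4 * (4^m * S m) + b m"
      by (simp add: S_def field_simps)
    moreover have "b m \<in> \<int>" using b01[of m] by auto
    ultimately show ?case using Suc by simp
  qed
  have tail: "0 \<le> 4^m * (s - S m) \<and> 4^m * (s - S m) < 1" for m
  proof -
    have "s = (\<Sum>j. b (j+m) / 4^(j+m+1)) + S m"
      unfolding s_def S_def by (rule suminf_split_initial_segment[OF sm])
    then have e1: "s - S m = (\<Sum>j. b (j+m) / 4^(j+m+1))" by simp
    have sm2: "summable (\<lambda>j. b (j+m) / 4^(j+m+1))"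
      using summable_ignore_initial_segment[OF sm, of m] by simp
    have "4^m * (s - S m) = (\<Sum>j. 4^m * (b (j+m) / 4^(j+m+1)))"
      unfolding e1 by (rule suminf_mult[OF sm2, symmetric])
    also have "\<dots> = (\<Sum>j. b (j+m) / 4^(j+1))"
      by (intro suminf_cong) (simp add: power_add field_simps)
    finally have e2: "4^m * (s - S m) = (\<Sum>j. b (j+m) / 4^(j+1))" .
    have sm3: "summable (\<lambda>j. b (j+m) / 4^(j+1))"
      by (rule summable_comparison_test[OF _ sums_summable[OF geo4]])
         (use bnn in \<open>auto intro!: exI[of _ 0] divide_right_mono\<close>)
    have "(\<Sum>j. b (j+m) / 4^(j+1)) \<le> (\<Sum>j. 1 / 4^(j+1))"
      by (rule suminf_le[OF _ sm3 sums_summable[OF geo4]])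
         (use bnn in \<open>auto intro!: divide_right_mono\<close>)
    also have "\<dots> = 1/3" using geo4 by (simp add: sums_iff)
    finally have "(\<Sum>j. b (j+m) / 4^(j+1)) \<le> 1/3" .
    moreover have "0 \<le> (\<Sum>j. b (j+m) / 4^(j+1))"
      by (rule suminf_nonneg[OF sm3]) (use bnn in auto)
    ultimately show ?thesis unfolding e2 by simp
  qed
  have fl: "of_int \<lfloor>4^m * s\<rfloor> = 4^m * S m" for m
  proof -
    obtain z where z: "4^m * S m = of_int z" using Sint[of m] by (auto elim: Ints_cases)
    have "4^m * s = of_int z + 4^m * (s - S m)" using z by (simp add: algebra_simps)
    then have "\<lfloor>4^m * s\<rfloor> = z" using tail[of m] by (simp add: floor_eq_iff)
    then show ?thesis using z by simp
  qed
  have "dig4 k s = 4^(k+1) * S (k+1) - 4 * (4^k * S k)"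
    unfolding dig4_def fl by simp
  also have "\<dots> = b k" by (simp add: S_def field_simps)
  finally show ?thesis unfolding s_def .
qed

lemma exists_embedding:
  "\<exists>(e :: real^'n \<Rightarrow> real) g. e \<in> borel_measurable borel \<and> g \<in> borel_measurable borel
     \<and> (\<forall>x. g (e x) = x)"
proof -
  define N where "N = CARD('n)"
  have N0: "0 < N" unfolding N_def by simp
  obtain idx :: "'n \<Rightarrow> nat" where bij: "bij_betw idx UNIV {0..<N}"
    using ex_bij_betw_finite_nat[of "UNIV :: 'n set"] unfolding N_def by auto
  define iv where "iv = inv_into UNIV idx"
  have idx_lt: "idx i < N" for i using bij by (auto simp: bij_betw_def)
  have iv_idx: "iv (idx i) = i" for i
    using bij unfolding iv_def by (simp add: bij_betw_def inv_into_f_f)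
  define bb where "bb x k = dig (k div N) (hh (x $ iv (k mod N)))" for x :: "real^'n" and k
  define e where "e x = (\<Sum>k. bb x k / 4^(k+1))" for x
  define g where "g s = (\<chi> i. hinv (\<Sum>j. dig4 (j*N + idx i) s / 2^(j+1)))" for s
  have "e \<in> borel_measurable borel"
    unfolding e_def bb_def by measurable
  moreover have "g \<in> borel_measurable borel"
    unfolding g_def by (intro measurable_vecI) simp
  moreover have "g (e x) = x" for x
  proof -
    have "g (e x) $ i = x $ i" for i
    proof -
      have "dig4 (j*N + idx i) (e x) = dig j (hh (x $ i))" for j
      proof -
        have "dig4 (j*N + idx i) (e x) = bb x (j*N + idx i)"
          unfolding e_def by (rule base4) (unfold bb_def, rule dig_01)
        also have "\<dots> = dig j (hh (x $ i))"
          using idx_lt[of i] N0 by (simp add: bb_def iv_idx)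
        finally show ?thesis .
      qed
      then have "(\<Sum>j. dig4 (j*N + idx i) (e x) / 2^(j+1)) = hh (x $ i)"
        using bin_sums[of "hh (x $ i)"] hh_bounds[of "x $ i"] by (simp add: sums_iff)
      then show ?thesis by (simp add: g_def hinv_hh)
    qed
    then show ?thesis by (simp add: vec_eq_iff)
  qed
  ultimately show ?thesis by blast
qed

lemma pow_half_small:
  fixes c \<epsilon> :: real assumes "0 < \<epsilon>" shows "\<exists>k::nat. c * (1/2)^k < \<epsilon>"
proof -
  have "(\<lambda>k. c * (1/2::real)^k) \<longlonglongrightarrow> c * 0"
    by (intro tendsto_mult tendsto_const LIMSEQ_realpow_zero) auto
  then have "eventually (\<lambda>k. c * (1/2::real)^k < \<epsilon>) sequentially"
    using assms by (auto dest: order_tendstoD)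
  then show ?thesis by (auto simp: eventually_sequentially)
qed

lemma le_by_pow_half:
  fixes a b :: real assumes "\<And>m::nat. a \<le> b + (1/2)^m" shows "a \<le> b"
proof (rule ccontr)
  assume "\<not> a \<le> b"
  then obtain k where "1 * (1/2::real)^k < a - b" using pow_half_small[of "a - b" 1] by auto
  with assms[of k] show False by simp
qed

lemma (in prob_space) atomless_halfish:
  assumes "atomless M" "A \<in> sets M" "0 < prob A"
  shows "\<exists>B\<in>sets M. B \<subseteq> A \<and> 0 < prob B \<and> prob B \<le> prob A / 2"
proof -
  obtain B where B: "B \<in> sets M" "B \<subseteq> A" "0 < prob B" "prob B < prob A"
    using assms unfolding atomless_def by blast
  have d: "prob (A - B) = prob A - prob B" using B assms by (simp add: finite_measure_Diff)
  show ?thesis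
  proof (cases "prob B \<le> prob A / 2")
    case True then show ?thesis using B by blast
  next
    case False
    then show ?thesis using B d assms by (intro bexI[of _ "A - B"]) auto
  qed
qed

lemma (in prob_space) atomless_small:
  assumes "atomless M" "A \<in> sets M" "0 < prob A" "0 < \<epsilon>"
  shows "\<exists>B\<in>sets M. B \<subseteq> A \<and> 0 < prob B \<and> prob B < \<epsilon>"
proof -
  have ex: "\<exists>B\<in>sets M. B \<subseteq> A \<and> 0 < prob B \<and> prob B \<le> prob A * (1/2)^k" for k
  proof (induction k)
    case 0 then show ?case using assms by auto
  next
    case (Suc k)
    then obtain B where B: "B\<in>sets M" "B \<subseteq> A" "0 < prob B" "prob B \<le> prob A * (1/2)^k" by blast
    then obtain C where C: "C\<in>sets M" "C \<subseteq> B" "0 < prob C" "prob C \<le> prob B / 2"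
      using atomless_halfish[OF assms(1)] by blast
    then show ?case using B by (intro bexI[of _ C]) auto
  qed
  obtain k where k: "prob A * (1/2)^k < \<epsilon>" using pow_half_small[OF assms(4)] by blast
  obtain B where "B\<in>sets M" "B \<subseteq> A" "0 < prob B" "prob B \<le> prob A * (1/2)^k"
    using ex[of k] by blast
  then show ?thesis using k by (intro bexI[of _ B]) auto
qed

lemma (in prob_space) atomless_exact:
  assumes at: "atomless M" and A: "A \<in> sets M" and t: "0 \<le> t" "t \<le> prob A"
  shows "\<exists>B\<in>sets M. B \<subseteq> A \<and> prob B = t"
proof -
  define S where "S B = {prob C | C. C \<in> sets M \<and> C \<subseteq> A - B \<and> prob B + prob C \<le> t}" for B
  define s where "s B = Sup (S B)" for B
  define good where "good B C \<longleftrightarrow> C \<in> sets M \<and> C \<subseteq> A - B \<and> prob B + prob C \<le> t \<and> s B \<le> 2 * prob C" for B C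
  have ex: "\<exists>C. good B C" if "B \<in> sets M" "prob B \<le> t" for B
  proof -
    have ne: "S B \<noteq> {}" using that unfolding S_def by (auto intro!: exI[of _ "{}"])
    have bdd: "bdd_above (S B)" unfolding S_def by (auto intro!: bdd_aboveI[of _ 1])
    show ?thesis
    proof (cases "s B \<le> 0")
      case True then show ?thesis using that unfolding good_def by (intro exI[of _ "{}"]) auto
    next
      case False
      then have "s B / 2 < Sup (S B)" unfolding s_def by simp
      then obtain x where "x \<in> S B" "s B / 2 < x" using less_cSup_iff[OF ne bdd] by auto
      then show ?thesis unfolding good_def S_def by auto
    qed
  qed
  define nxt where "nxt B = (SOME C. good B C)" for B
  define Bs where "Bs k = rec_nat {} (\<lambda>_ B. B \<union> nxt B) k" for k
  have Bs0: "Bs 0 = {}" and BsS: "Bs (Suc k) = Bs k \<union> nxt (Bs k)" for k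
    by (simp_all add: Bs_def)
  have inv: "Bs k \<in> sets M \<and> Bs k \<subseteq> A \<and> prob (Bs k) \<le> t \<and> good (Bs k) (nxt (Bs k))" for k
  proof (induction k)
    case 0
    have "good {} (nxt {})" unfolding nxt_def using ex[of "{}"] t by (auto intro: someI_ex)
    then show ?case using t by (simp add: Bs0)
  next
    case (Suc k)
    then have g: "good (Bs k) (nxt (Bs k))" by blast
    have disj: "Bs k \<inter> nxt (Bs k) = {}" using g unfolding good_def by auto
    have pu: "prob (Bs (Suc k)) = prob (Bs k) + prob (nxt (Bs k))"
      unfolding BsS using disj g Suc unfolding good_def by (intro finite_measure_Union) auto
    have "Bs (Suc k) \<in> sets M" "Bs (Suc k) \<subseteq> A" "prob (Bs (Suc k)) \<le> t"
      using Suc g pu unfolding BsS good_def by auto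
    moreover have "good (Bs (Suc k)) (nxt (Bs (Suc k)))"
      unfolding nxt_def using ex[of "Bs (Suc k)"] calculation by (auto intro: someI_ex)
    ultimately show ?case by blast
  qed
  have step: "prob (Bs (Suc k)) = prob (Bs k) + prob (nxt (Bs k))" for k
  proof -
    have g: "good (Bs k) (nxt (Bs k))" "Bs k \<in> sets M" using inv[of k] by auto
    have disj: "Bs k \<inter> nxt (Bs k) = {}" using g unfolding good_def by auto
    show ?thesis
      unfolding BsS using disj g unfolding good_def by (intro finite_measure_Union) auto
  qed
  define B where "B = (\<Union>k. Bs k)"
  have inc: "incseq Bs" by (rule incseq_SucI) (simp add: BsS)
  have Bsets: "B \<in> sets M" unfolding B_def using inv by auto
  have BA: "B \<subseteq> A" unfolding B_def using inv by auto
  have lim: "(\<lambda>k. prob (Bs k)) \<longlonglongrightarrow> prob B"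
    unfolding B_def by (rule finite_Lim_measure_incseq) (use inv inc in auto)
  have Bt: "prob B \<le> t" by (rule LIMSEQ_le_const2[OF lim]) (use inv in auto)
  have "(\<lambda>k. prob (Bs (Suc k)) - prob (Bs k)) \<longlonglongrightarrow> prob B - prob B"
    by (intro tendsto_diff lim LIMSEQ_Suc)
  then have limC: "(\<lambda>k. 2 * prob (nxt (Bs k))) \<longlonglongrightarrow> 2 * 0"
    by (intro tendsto_mult tendsto_const) (simp add: step)
  show ?thesis
  proof (cases "prob B < t")
    case False then show ?thesis using Bt Bsets BA by (intro bexI[of _ B]) auto
  next
    case True
    have "prob (A - B) = prob A - prob B" using Bsets BA A by (simp add: finite_measure_Diff)
    then have "0 < prob (A - B)" using True t by simp
    then obtain D where D: "D \<in> sets M" "D \<subseteq> A - B" "0 < prob D" "prob D < t - prob B"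
      using atomless_small[OF at _ _, of "A - B" "t - prob B"] True A Bsets by auto
    have "prob D \<le> 2 * prob (nxt (Bs k))" for k
    proof -
      have BkB: "Bs k \<subseteq> B" unfolding B_def by auto
      have "prob (Bs k) \<le> prob B" using BkB Bsets by (auto intro: finite_measure_mono)
      then have "prob D \<in> S (Bs k)" unfolding S_def using D BkB
        by (intro CollectI exI[of _ D]) auto
      then have "prob D \<le> s (Bs k)" unfolding s_def
        by (rule cSup_upper) (auto simp: S_def intro!: bdd_aboveI[of _ 1])
      then show ?thesis using inv[of k] unfolding good_def by linarith
    qed
    then have "prob D \<le> 2 * 0" by (intro LIMSEQ_le_const[OF limC]) auto
    then show ?thesis using D by simp
  qed
qed

definition halfset :: "'a measure \<Rightarrow> 'a set \<Rightarrow> 'a set" where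
  "halfset M A = (SOME B. B \<in> sets M \<and> B \<subseteq> A \<and> measure M B = measure M A / 2)"

fun cells :: "'a measure \<Rightarrow> nat \<Rightarrow> nat \<Rightarrow> 'a set" where
  "cells M 0 j = (if j = 0 then space M else {})"
| "cells M (Suc m) j = (if even j then halfset M (cells M m (j div 2))
      else cells M m (j div 2) - halfset M (cells M m (j div 2)))"

lemma (in finite_measure) measure_eq_upto_null:
  assumes "A \<in> sets M" "B \<in> sets M" "N \<in> sets M" "measure M N = 0"
    "A \<subseteq> B \<union> N" "B \<subseteq> A \<union> N"
  shows "measure M A = measure M B"
proof -
  have "measure M A \<le> measure M (B \<union> N)" using assms by (intro finite_measure_mono) auto
  also have "\<dots> \<le> measure M B + measure M N" using assms by (intro measure_Un_le) auto
  finally have 1: "measure M A \<le> measure M B" using assms by simp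
  have "measure M B \<le> measure M (A \<union> N)" using assms by (intro finite_measure_mono) auto
  also have "\<dots> \<le> measure M A + measure M N" using assms by (intro measure_Un_le) auto
  finally have 2: "measure M B \<le> measure M A" using assms by simp
  from 1 2 show ?thesis by simp
qed

context prob_space
begin

lemma halfset_props:
  assumes at: "atomless M" and A: "A \<in> sets M"
  shows "halfset M A \<in> sets M \<and> halfset M A \<subseteq> A \<and> prob (halfset M A) = prob A / 2"
proof -
  have "\<exists>B. B \<in> sets M \<and> B \<subseteq> A \<and> prob B = prob A / 2"
    using atomless_exact[OF at A, of "prob A / 2"] by auto
  then show ?thesis unfolding halfset_def by (rule someI_ex)
qed

lemma cells_props:
  assumes at: "atomless M"
  shows "cells M m j \<in> sets M \<and> (2^m \<le> j \<longrightarrow> cells M m j = {})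
     \<and> (j < 2^m \<longrightarrow> prob (cells M m j) = 1 / 2^m)"
proof (induction m arbitrary: j)
  case 0 then show ?case by (simp add: prob_space)
next
  case (Suc m)
  let ?p = "cells M m (j div 2)"
  have p: "?p \<in> sets M" "2^m \<le> j div 2 \<longrightarrow> ?p = {}" "j div 2 < 2^m \<longrightarrow> prob ?p = 1/2^m"
    using Suc[of "j div 2"] by auto
  have h: "halfset M ?p \<in> sets M" "halfset M ?p \<subseteq> ?p" "prob (halfset M ?p) = prob ?p / 2"
    using halfset_props[OF at p(1)] by auto
  have sets: "cells M (Suc m) j \<in> sets M" using p h by auto
  have emp: "2^Suc m \<le> j \<longrightarrow> cells M (Suc m) j = {}"
  proof
    assume "2^Suc m \<le> j"
    then have "2^m \<le> j div 2" by auto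
    then show "cells M (Suc m) j = {}" using p h by auto
  qed
  have pr: "j < 2^Suc m \<longrightarrow> prob (cells M (Suc m) j) = 1/2^Suc m"
  proof
    assume "j < 2^Suc m"
    then have "j div 2 < 2^m" by auto
    then have pp: "prob ?p = 1/2^m" using p by auto
    show "prob (cells M (Suc m) j) = 1/2^Suc m"
    proof (cases "even j")
      case True then show ?thesis using h pp by simp
    next
      case False
      then have "prob (cells M (Suc m) j) = prob ?p - prob (halfset M ?p)"
        using h p by (simp add: finite_measure_Diff)
      then show ?thesis using h pp by simp
    qed
  qed
  show ?case using sets emp pr by blast
qed

lemma cells_sub: "atomless M \<Longrightarrow> cells M (Suc m) j \<subseteq> cells M m (j div 2)"
  using halfset_props[of "cells M m (j div 2)"] cells_props[of m "j div 2"] by auto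

lemma cells_disj:
  assumes at: "atomless M"
  shows "j \<noteq> j' \<Longrightarrow> cells M m j \<inter> cells M m j' = {}"
proof (induction m arbitrary: j j')
  case 0 then show ?case by auto
next
  case (Suc m)
  show ?case
  proof (cases "j div 2 = j' div 2")
    case False
    then show ?thesis using Suc.IH[OF False] cells_sub[OF at, of m j] cells_sub[OF at, of m j'] by blast
  next
    case True
    then have "even j \<noteq> even j'" using Suc.prems
      by (metis dvd_mult_div_cancel odd_two_times_div_two_succ)
    then show ?thesis using True by auto
  qed
qed

lemma cells_cover:
  assumes at: "atomless M" and w: "\<omega> \<in> space M"
  shows "\<exists>j. \<omega> \<in> cells M m j"
proof (induction m)
  case 0 then show ?case using w by (intro exI[of _ 0]) simp
next
  case (Suc m)
  then obtain j where j: "\<omega> \<in> cells M m j" by blast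
  show ?case
  proof (cases "\<omega> \<in> halfset M (cells M m j)")
    case True then show ?thesis by (intro exI[of _ "2*j"]) simp
  next
    case False then show ?thesis using j by (intro exI[of _ "2*j+1"]) simp
  qed
qed

lemma cells_lt: "atomless M \<Longrightarrow> \<omega> \<in> cells M m j \<Longrightarrow> j < 2^m"
  using cells_props[of m j] by (cases "j < 2^m") auto

end

context prob_space
begin

definition aa :: "nat \<Rightarrow> 'a \<Rightarrow> real" where
  "aa m \<omega> = (\<Sum>j<2^m. real j * indicator (cells M m j) \<omega>) / 2^m"

lemma aa_eq:
  assumes at: "atomless M" and w: "\<omega> \<in> cells M m j"
  shows "aa m \<omega> = real j / 2^m"
proof -
  have ind: "indicator (cells M m j') \<omega> = (if j' = j then 1 else 0 :: real)" for j'
    using cells_disj[OF at, of j' j m] w by (auto simp: indicator_def)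
  have "j < 2^m" using cells_lt[OF at w] .
  then show ?thesis unfolding aa_def ind by (simp add: if_distrib sum.delta cong: if_cong)
qed

lemma aa_measurable:
  assumes at: "atomless M" shows "aa m \<in> borel_measurable M"
proof -
  have [measurable]: "cells M m j \<in> sets M" for j using cells_props[OF at] by blast
  show ?thesis unfolding aa_def by measurable
qed

lemma aa_step:
  assumes at: "atomless M" and w: "\<omega> \<in> space M"
  shows "aa m \<omega> \<le> aa (Suc m) \<omega> \<and> aa (Suc m) \<omega> + 1/2^Suc m \<le> aa m \<omega> + 1/2^m"
proof -
  obtain j where j: "\<omega> \<in> cells M (Suc m) j" using cells_cover[OF at w] by blast
  then have j2: "\<omega> \<in> cells M m (j div 2)" using cells_sub[OF at] by blast
  have e1: "aa (Suc m) \<omega> = real j / 2^Suc m" using aa_eq[OF at j] .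
  have e2: "aa m \<omega> = real (j div 2) / 2^m" using aa_eq[OF at j2] .
  have a: "2 * real (j div 2) \<le> real j" "real j \<le> 2 * real (j div 2) + 1" by linarith+
  have "real (j div 2) / 2^m \<le> real j / 2^Suc m"
    using a by (simp add: field_simps)
  moreover have "real j / 2^Suc m + 1/2^Suc m \<le> real (j div 2) / 2^m + 1/2^m"
  proof -
    have "real j * 2^m \<le> (1 + 2 * real (j div 2)) * 2^m"
      by (rule mult_right_mono) (use a in auto)
    then show ?thesis by (simp add: field_simps)
  qed
  ultimately show ?thesis using e1 e2 by simp
qed

lemma aa_bound:
  assumes at: "atomless M" and w: "\<omega> \<in> space M"
  shows "aa p \<omega> \<le> aa m \<omega> + 1/2^m"
proof -
  have inc: "incseq (\<lambda>m. aa m \<omega>)" by (rule incseq_SucI) (use aa_step[OF at w] in blast)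
  have dec: "decseq (\<lambda>m. aa m \<omega> + 1/2^m)" by (rule decseq_SucI) (use aa_step[OF at w] in blast)
  show ?thesis
  proof (cases "p \<le> m")
    case True
    then have "aa p \<omega> \<le> aa m \<omega>" using inc by (auto simp: incseq_def)
    then show ?thesis by (simp add: add_increasing2)
  next
    case False
    then have "aa p \<omega> + 1/2^p \<le> aa m \<omega> + 1/2^m" using dec by (auto simp: decseq_def)
    moreover have "0 \<le> 1/(2::real)^p" by simp
    ultimately show ?thesis by linarith
  qed
qed

definition UU :: "'a \<Rightarrow> real" where "UU \<omega> = (SUP m. aa m \<omega>)"

lemma UU_bounds:
  assumes at: "atomless M" and w: "\<omega> \<in> space M"
  shows "aa m \<omega> \<le> UU \<omega> \<and> UU \<omega> \<le> aa m \<omega> + 1/2^m"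
proof -
  have bdd: "bdd_above (range (\<lambda>p. aa p \<omega>))"
    using aa_bound[OF at w, of _ 0] by (intro bdd_aboveI[of _ "aa 0 \<omega> + 1"]) auto
  have "aa m \<omega> \<le> UU \<omega>" unfolding UU_def by (rule cSUP_upper[OF _ bdd]) simp
  moreover have "UU \<omega> \<le> aa m \<omega> + 1/2^m" unfolding UU_def
    by (rule cSUP_least) (auto intro: aa_bound[OF at w])
  ultimately show ?thesis by blast
qed

lemma UU_measurable:
  assumes at: "atomless M" shows "UU \<in> borel_measurable M"
proof (rule borel_measurable_LIMSEQ_real[OF _ aa_measurable[OF at]])
  fix \<omega> assume w: "\<omega> \<in> space M"
  have inc: "incseq (\<lambda>m. aa m \<omega>)" by (rule incseq_SucI) (use aa_step[OF at w] in blast)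
  have bdd: "bdd_above (range (\<lambda>p. aa p \<omega>))"
    using aa_bound[OF at w, of _ 0] by (intro bdd_aboveI[of _ "aa 0 \<omega> + 1"]) auto
  show "(\<lambda>m. aa m \<omega>) \<longlonglongrightarrow> UU \<omega>" unfolding UU_def by (rule LIMSEQ_incseq_SUP[OF bdd inc])
qed

lemma Lt_prob:
  assumes at: "atomless M" and j: "j \<le> 2^m"
  shows "prob (\<Union>j'<j. cells M m j') = real j / 2^m"
proof -
  have "prob (\<Union>j'<j. cells M m j') = (\<Sum>j'<j. prob (cells M m j'))"
    using cells_props[OF at] cells_disj[OF at]
    by (intro finite_measure_finite_Union) (auto simp: disjoint_family_on_def)
  also have "\<dots> = (\<Sum>j'<j. 1/2^m)" using cells_props[OF at] j by (intro sum.cong) auto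
  finally show ?thesis by simp
qed

lemma UU_lt:
  assumes at: "atomless M" and j: "j \<le> 2^m"
  shows "prob {\<omega>\<in>space M. UU \<omega> < real j / 2^m} \<le> real j / 2^m"
proof -
  have sets: "(\<Union>j'<j. cells M m j') \<in> sets M" using cells_props[OF at] by auto
  have "{\<omega>\<in>space M. UU \<omega> < real j / 2^m} \<subseteq> (\<Union>j'<j. cells M m j')"
  proof safe
    fix \<omega> assume w: "\<omega> \<in> space M" and lt: "UU \<omega> < real j / 2^m"
    obtain j0 where j0: "\<omega> \<in> cells M m j0" using cells_cover[OF at w] by blast
    have "real j0 / 2^m < real j / 2^m" using UU_bounds[OF at w, of m] aa_eq[OF at j0] lt by simp
    then have "j0 < j" by (simp add: divide_less_cancel)
    then show "\<omega> \<in> (\<Union>j'<j. cells M m j')" using j0 by auto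
  qed
  then have "prob {\<omega>\<in>space M. UU \<omega> < real j / 2^m} \<le> prob (\<Union>j'<j. cells M m j')"
    using sets by (intro finite_measure_mono) auto
  then show ?thesis using Lt_prob[OF at j] by simp
qed

lemma UU_le:
  assumes at: "atomless M" and j: "j \<le> 2^m"
  shows "real j / 2^m \<le> prob {\<omega>\<in>space M. UU \<omega> \<le> real j / 2^m}"
proof -
  have [measurable]: "UU \<in> borel_measurable M" using UU_measurable[OF at] .
  have "(\<Union>j'<j. cells M m j') \<subseteq> {\<omega>\<in>space M. UU \<omega> \<le> real j / 2^m}"
  proof safe
    fix \<omega> j0 assume j0: "j0 < j" "\<omega> \<in> cells M m j0"
    then have w: "\<omega> \<in> space M" using cells_props[OF at, of m j0] sets.sets_into_space by blast
    then show "\<omega> \<in> space M" .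
    have "UU \<omega> \<le> real j0 / 2^m + 1/2^m" using UU_bounds[OF at w, of m] aa_eq[OF at j0(2)] by simp
    also have "\<dots> = (real j0 + 1) / 2^m" by (simp add: field_simps)
    also have "\<dots> \<le> real j / 2^m" using j0 by (intro divide_right_mono) auto
    finally show "UU \<omega> \<le> real j / 2^m" .
  qed
  then have "prob (\<Union>j'<j. cells M m j') \<le> prob {\<omega>\<in>space M. UU \<omega> \<le> real j / 2^m}"
    by (intro finite_measure_mono) auto
  then show ?thesis using Lt_prob[OF at j] by simp
qed

end

context prob_space
begin

lemma UU_cdf:
  assumes at: "atomless M" and x: "0 \<le> x" "x \<le> 1"
  shows "prob {\<omega>\<in>space M. UU \<omega> \<le> x} = x"
proof -
  have [measurable]: "UU \<in> borel_measurable M" using UU_measurable[OF at] .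
  have up: "prob {\<omega>\<in>space M. UU \<omega> \<le> x} \<le> x + (1/2)^m" for m
  proof -
    define k where "k = nat \<lfloor>2^m*x\<rfloor> + 1"
    have fl0: "0 \<le> \<lfloor>2^m*x\<rfloor>" using x by simp
    have rk: "real k = of_int \<lfloor>2^m*x\<rfloor> + 1" unfolding k_def using fl0 by simp
    have k1: "2^m*x < real k" "real k \<le> 2^m*x + 1" unfolding rk by linarith+
    show ?thesis
    proof (cases "k \<le> 2^m")
      case True
      have xk: "x < real k / 2^m" using k1 by (simp add: field_simps)
      have "prob {\<omega>\<in>space M. UU \<omega> \<le> x} \<le> prob {\<omega>\<in>space M. UU \<omega> < real k / 2^m}"
        using xk by (intro finite_measure_mono) auto
      also have "\<dots> \<le> real k / 2^m" by (rule UU_lt[OF at True])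
      also have "\<dots> \<le> x + 1/2^m" using k1 by (simp add: field_simps)
      finally show ?thesis by (simp add: power_one_over)
    next
      case False
      then have "real (2^m) + 1 \<le> real k" by linarith
      then have "(2::real)^m + 1 \<le> real k" by simp
      then have "2^m * 1 \<le> 2^m * x" using k1 by linarith
      then have "1 \<le> x" by (subst (asm) mult_le_cancel_left_pos) auto
      then show ?thesis using prob_le_1[of "{\<omega>\<in>space M. UU \<omega> \<le> x}"]
        by (smt (verit) zero_le_power zero_le_divide_1_iff)
    qed
  qed
  have lo: "x \<le> prob {\<omega>\<in>space M. UU \<omega> \<le> x} + (1/2)^m" for m
  proof -
    define k where "k = nat \<lfloor>2^m*x\<rfloor>"
    have fl0: "0 \<le> \<lfloor>2^m*x\<rfloor>" using x by simp
    have rk: "real k = of_int \<lfloor>2^m*x\<rfloor>" unfolding k_def using fl0 by simp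
    have k1: "real k \<le> 2^m*x" "2^m*x < real k + 1" unfolding rk by linarith+
    have "real k \<le> 2^m" using k1 x by (smt (verit) mult_left_le zero_le_power)
    then have kle: "k \<le> 2^m" by (metis of_nat_le_iff of_nat_numeral of_nat_power)
    have kx: "real k / 2^m \<le> x" using k1 by (simp add: field_simps)
    have "x - 1/2^m = (2^m*x - 1)/2^m" by (simp add: field_simps)
    also have "\<dots> \<le> real k / 2^m" using k1 by (intro divide_right_mono) auto
    also have "\<dots> \<le> prob {\<omega>\<in>space M. UU \<omega> \<le> real k / 2^m}" by (rule UU_le[OF at kle])
    also have "\<dots> \<le> prob {\<omega>\<in>space M. UU \<omega> \<le> x}"
      using kx by (intro finite_measure_mono) auto
    finally show ?thesis by (simp add: power_one_over)
  qed
  have "prob {\<omega>\<in>space M. UU \<omega> \<le> x} \<le> x" by (rule le_by_pow_half) (rule up)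
  moreover have "x \<le> prob {\<omega>\<in>space M. UU \<omega> \<le> x}" by (rule le_by_pow_half) (rule lo)
  ultimately show ?thesis by simp
qed

lemma exists_uniform:
  assumes at: "atomless M"
  shows "\<exists>U\<in>borel_measurable M. (\<forall>\<omega>\<in>space M. 0 < U \<omega> \<and> U \<omega> < 1)
     \<and> (\<forall>x. 0 \<le> x \<longrightarrow> x \<le> 1 \<longrightarrow> prob {\<omega>\<in>space M. U \<omega> \<le> x} = x)"
proof -
  have [measurable]: "UU \<in> borel_measurable M" using UU_measurable[OF at] .
  have p0: "prob {\<omega>\<in>space M. UU \<omega> \<le> 0} = 0" using UU_cdf[OF at, of 0] by simp
  have p1: "prob {\<omega>\<in>space M. UU \<omega> < 1} = 1"
  proof -
    have "1 \<le> prob {\<omega>\<in>space M. UU \<omega> < 1} + (1/2)^m" for m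
    proof -
      have "1 - 1/2^m = prob {\<omega>\<in>space M. UU \<omega> \<le> 1 - 1/2^m}"
        by (rule UU_cdf[OF at, symmetric]) (auto simp: field_simps)
      also have "\<dots> \<le> prob {\<omega>\<in>space M. UU \<omega> < 1}"
      proof -
        have pos: "1 - 1/2^m < (1::real)" by simp
        show ?thesis by (intro finite_measure_mono) (auto intro: le_less_trans[OF _ pos])
      qed
      finally show ?thesis by (simp add: power_one_over)
    qed
    then have "1 \<le> prob {\<omega>\<in>space M. UU \<omega> < 1}" by (rule le_by_pow_half)
    then show ?thesis using prob_le_1[of "{\<omega>\<in>space M. UU \<omega> < 1}"] by simp
  qed
  define N where "N = {\<omega>\<in>space M. UU \<omega> \<le> 0} \<union> (space M - {\<omega>\<in>space M. UU \<omega> < 1})"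
  have Ns: "N \<in> sets M" unfolding N_def by measurable
  have "prob (space M - {\<omega>\<in>space M. UU \<omega> < 1}) = 0"
    using p1 by (subst prob_compl) auto
  then have N0: "prob N = 0"
  proof -
    assume c: "prob (space M - {\<omega>\<in>space M. UU \<omega> < 1}) = 0"
    have s1: "{\<omega>\<in>space M. UU \<omega> \<le> 0} \<in> sets M" by measurable
    have s2: "space M - {\<omega>\<in>space M. UU \<omega> < 1} \<in> sets M" by measurable
    have "prob N \<le> prob {\<omega>\<in>space M. UU \<omega> \<le> 0} + prob (space M - {\<omega>\<in>space M. UU \<omega> < 1})"
      unfolding N_def by (rule measure_Un_le[OF s1 s2])
    then have "prob N \<le> 0" using c p0 by simp
    then show ?thesis using measure_nonneg[of M N] by linarith
  qed
  define U where "U \<omega> = (if 0 < UU \<omega> \<and> UU \<omega> < 1 then UU \<omega> else 1/2)" for \<omega>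
  have Um: "U \<in> borel_measurable M" unfolding U_def by measurable
  have "prob {\<omega>\<in>space M. U \<omega> \<le> x} = x" if x: "0 \<le> x" "x \<le> 1" for x
  proof -
    have "prob {\<omega>\<in>space M. U \<omega> \<le> x} = prob {\<omega>\<in>space M. UU \<omega> \<le> x}"
      by (rule measure_eq_upto_null[OF _ _ Ns N0])
         (use Um in \<open>auto simp: N_def U_def\<close>)
    then show ?thesis using UU_cdf[OF at x] by simp
  qed
  moreover have "\<forall>\<omega>\<in>space M. 0 < U \<omega> \<and> U \<omega> < 1" by (auto simp: U_def)
  ultimately show ?thesis using Um by blast
qed

end

context prob_space
begin

lemma exists_with_cdf:
  assumes at: "atomless M" and rcm: "right_continuous_mono K 0 1"
    and K01: "\<And>x. 0 \<le> K x \<and> K x \<le> 1"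
  shows "\<exists>W\<in>borel_measurable M. \<forall>x. prob {\<omega>\<in>space M. W \<omega> \<le> x} = K x"
proof -
  obtain U where U: "U \<in> borel_measurable M" "\<forall>\<omega>\<in>space M. 0 < U \<omega> \<and> U \<omega> < 1"
    "\<forall>x. 0 \<le> x \<longrightarrow> x \<le> 1 \<longrightarrow> prob {\<omega>\<in>space M. U \<omega> \<le> x} = x"
    using exists_uniform[OF at] by blast
  define W where "W \<omega> = Inf {x. U \<omega> \<le> K x}" for \<omega>
  have eq: "{\<omega>\<in>space M. W \<omega> \<le> x} = {\<omega>\<in>space M. U \<omega> \<le> K x}" for x
    using right_continuous_mono.pseudoinverse[OF rcm] U(2) unfolding W_def by blast
  have Wm: "W \<in> borel_measurable M"
  proof (subst borel_measurable_iff_le, intro allI)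
    fix a
    have [measurable]: "U \<in> borel_measurable M" using U(1) .
    show "{w \<in> space M. W w \<le> a} \<in> sets M" unfolding eq by measurable
  qed
  show ?thesis using Wm eq U(3) K01 by (intro bexI[of _ W]) auto
qed

lemma mix_sets:
  assumes [measurable]: "W \<in> borel_measurable M" "W1 \<in> borel_measurable M" "W2 \<in> borel_measurable M"
    and K: "\<And>x. prob {\<omega>\<in>space M. W \<omega> \<le> x}
       = l * prob {\<omega>\<in>space M. W1 \<omega> \<le> x} + (1-l) * prob {\<omega>\<in>space M. W2 \<omega> \<le> x}"
    and C: "C \<in> sets (borel :: real measure)"
  shows "prob (W -` C \<inter> space M) = l * prob (W1 -` C \<inter> space M) + (1-l) * prob (W2 -` C \<inter> space M)"
proof -
  have Cs: "C \<in> sigma_sets UNIV (range atMost)"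
    using C by (simp add: borel_eq_atMost)
  have ist: "Int_stable (range atMost :: real set set)" by (auto simp: Int_stable_def)
  have cl: "range atMost \<subseteq> Pow (UNIV::real set)" by auto
  show ?thesis
  using ist cl Cs
  proof (induction rule: sigma_sets_induct_disjoint)
    case (basic A)
    then obtain a where a: "A = {..a}" by auto
    have "\<And>V. V -` A \<inter> space M = {\<omega>\<in>space M. V \<omega> \<le> a}" unfolding a by auto
    then show ?case using K by simp
  next
    case empty then show ?case by simp
  next
    case (compl A)
    have As: "A \<in> sets borel" using compl(1) by (simp add: borel_eq_atMost)
    have c: "\<And>V. V \<in> borel_measurable M \<Longrightarrow> prob (V -` (UNIV - A) \<inter> space M) = 1 - prob (V -` A \<inter> space M)"
    proof -
      fix V :: "'a \<Rightarrow> real" assume V: "V \<in> borel_measurable M"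
      have "V -` (UNIV - A) \<inter> space M = space M - (V -` A \<inter> space M)" by auto
      moreover have "V -` A \<inter> space M \<in> sets M" using V As by (rule measurable_sets)
      ultimately show "prob (V -` (UNIV - A) \<inter> space M) = 1 - prob (V -` A \<inter> space M)"
        by (simp add: prob_compl)
    qed
    show ?case using compl(2) by (simp add: c algebra_simps)
  next
    case (union A)
    have As: "A i \<in> sets borel" for i using union(2) by (auto simp: borel_eq_atMost)
    have su: "(\<lambda>i. prob (V -` A i \<inter> space M)) sums prob (V -` (\<Union>i. A i) \<inter> space M)"
      if V: "V \<in> borel_measurable M" for V :: "'a \<Rightarrow> real"
    proof -
      have "(\<lambda>i. prob (V -` A i \<inter> space M)) sums prob (\<Union>i. V -` A i \<inter> space M)"
        using V As union(1)
        by (intro finite_measure_UNION) (auto simp: disjoint_family_on_def intro: measurable_sets)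
      moreover have "(\<Union>i. V -` A i \<inter> space M) = V -` (\<Union>i. A i) \<inter> space M" by auto
      ultimately show ?thesis by simp
    qed
    have s1: "(\<lambda>i. l * prob (W1 -` A i \<inter> space M) + (1-l) * prob (W2 -` A i \<inter> space M)) sums
       (l * prob (W1 -` (\<Union>i. A i) \<inter> space M) + (1-l) * prob (W2 -` (\<Union>i. A i) \<inter> space M))"
      by (intro sums_add sums_mult su) measurable
    have s2: "(\<lambda>i. prob (W -` A i \<inter> space M)) sums prob (W -` (\<Union>i. A i) \<inter> space M)"
      by (rule su) measurable
    show ?case using s1 s2 union(3) sums_unique2 by simp
  qed
qed

end

lemma cdf_distr_eq:
  assumes "prob_space P" "h \<in> borel_measurable P"
  shows "cdf (distr P borel h) x = measure P {\<omega>\<in>space P. h \<omega> \<le> x}"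
proof -
  have "cdf (distr P borel h) x = measure P (h -` {..x} \<inter> space P)"
    unfolding cdf_def using assms by (simp add: measure_distr)
  also have "h -` {..x} \<inter> space P = {\<omega>\<in>space P. h \<omega> \<le> x}" by auto
  finally show ?thesis .
qed

lemma mix_realize:
  fixes P :: "'a measure" and X Y :: "'n::finite \<Rightarrow> 'a \<Rightarrow> real"
  assumes ps: "prob_space P" and at: "atomless P"
    and Xm: "\<And>i. X i \<in> borel_measurable P" and Ym: "\<And>i. Y i \<in> borel_measurable P"
    and l: "0 \<le> l" "l \<le> 1"
  shows "\<exists>Z. (\<forall>i. Z i \<in> borel_measurable P) \<and> (\<forall>B\<in>sets (borel :: (real^'n) measure).
     measure P ((\<lambda>\<omega>. \<chi> i. Z i \<omega>) -` B \<inter> space P)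
       = l * measure P ((\<lambda>\<omega>. \<chi> i. X i \<omega>) -` B \<inter> space P)
         + (1-l) * measure P ((\<lambda>\<omega>. \<chi> i. Y i \<omega>) -` B \<inter> space P))"
proof -
  interpret prob_space P by (rule ps)
  obtain e :: "real^'n \<Rightarrow> real" and g where e[measurable]: "e \<in> borel_measurable borel"
    and g[measurable]: "g \<in> borel_measurable borel" and ge: "\<forall>x. g (e x) = x"
    using exists_embedding by blast
  define VX where "VX \<omega> = (\<chi> i. X i \<omega>)" for \<omega>
  define VY where "VY \<omega> = (\<chi> i. Y i \<omega>)" for \<omega>
  have VXm[measurable]: "VX \<in> borel_measurable P" unfolding VX_def by (rule measurable_vecI) (simp add: Xm)
  have VYm[measurable]: "VY \<in> borel_measurable P" unfolding VY_def by (rule measurable_vecI) (simp add: Ym)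
  define W1 where "W1 \<omega> = e (VX \<omega>)" for \<omega>
  define W2 where "W2 \<omega> = e (VY \<omega>)" for \<omega>
  have W1m[measurable]: "W1 \<in> borel_measurable P" unfolding W1_def by measurable
  have W2m[measurable]: "W2 \<in> borel_measurable P" unfolding W2_def by measurable
  define D1 where "D1 = distr P borel W1"
  define D2 where "D2 = distr P borel W2"
  interpret D1: real_distribution D1 unfolding D1_def by simp
  interpret D2: real_distribution D2 unfolding D2_def by simp
  define K where "K x = l * prob {\<omega>\<in>space P. W1 \<omega> \<le> x} + (1-l) * prob {\<omega>\<in>space P. W2 \<omega> \<le> x}" for x
  have Keq: "K = (\<lambda>x. l * cdf D1 x + (1-l) * cdf D2 x)"
    unfolding K_def D1_def D2_def by (intro ext) (simp add: cdf_distr_eq[OF ps])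
  have rcm: "right_continuous_mono K 0 1"
  proof
    show "continuous (at_right x) K" for x
      unfolding Keq by (intro continuous_intros D1.cdf_is_right_cont D2.cdf_is_right_cont)
    show "mono K" unfolding Keq
      using l by (intro monoI add_mono mult_left_mono D1.cdf_nondecreasing D2.cdf_nondecreasing) auto
    have "((\<lambda>x. l * cdf D1 x + (1-l) * cdf D2 x) \<longlongrightarrow> l * 0 + (1-l) * 0) at_bot"
      by (intro tendsto_intros D1.cdf_lim_at_bot D2.cdf_lim_at_bot)
    then show "(K \<longlongrightarrow> 0) at_bot" unfolding Keq by simp
    have "((\<lambda>x. l * cdf D1 x + (1-l) * cdf D2 x) \<longlongrightarrow> l * 1 + (1-l) * 1) at_top"
      by (intro tendsto_intros D1.cdf_lim_at_top_prob D2.cdf_lim_at_top_prob)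
    then show "(K \<longlongrightarrow> 1) at_top" unfolding Keq by simp
  qed
  have K01: "0 \<le> K x \<and> K x \<le> 1" for x
  proof -
    have a: "0 \<le> cdf D1 x" "cdf D1 x \<le> 1" "0 \<le> cdf D2 x" "cdf D2 x \<le> 1"
      using D1.cdf_nonneg D1.cdf_bounded_prob D2.cdf_nonneg D2.cdf_bounded_prob by auto
    have "l * cdf D1 x \<le> l * 1" "(1-l) * cdf D2 x \<le> (1-l) * 1"
      using a l by (intro mult_left_mono; simp)+
    moreover have "0 \<le> l * cdf D1 x" "0 \<le> (1-l) * cdf D2 x" using a l by simp_all
    ultimately show ?thesis unfolding Keq by simp
  qed
  obtain W where Wm[measurable]: "W \<in> borel_measurable P"
    and WK: "\<forall>x. prob {\<omega>\<in>space P. W \<omega> \<le> x} = K x"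
    using exists_with_cdf[OF at rcm K01] by blast
  have mix: "prob (W -` C \<inter> space P) = l * prob (W1 -` C \<inter> space P) + (1-l) * prob (W2 -` C \<inter> space P)"
    if C: "C \<in> sets borel" for C
    by (rule mix_sets[OF Wm W1m W2m _ C]) (simp add: WK K_def)
  define Z where "Z i \<omega> = g (W \<omega>) $ i" for i \<omega>
  have Zm: "Z i \<in> borel_measurable P" for i unfolding Z_def by measurable
  have VZ: "(\<lambda>\<omega>. \<chi> i. Z i \<omega>) = (\<lambda>\<omega>. g (W \<omega>))" unfolding Z_def by (simp add: vec_lambda_eta)
  have "measure P ((\<lambda>\<omega>. \<chi> i. Z i \<omega>) -` B \<inter> space P)
       = l * measure P ((\<lambda>\<omega>. \<chi> i. X i \<omega>) -` B \<inter> space P)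
         + (1-l) * measure P ((\<lambda>\<omega>. \<chi> i. Y i \<omega>) -` B \<inter> space P)"
    if B: "B \<in> sets (borel :: (real^'n) measure)" for B
  proof -
    have C: "g -` B \<in> sets borel" using measurable_sets[OF g B] by simp
    have e0: "(\<lambda>\<omega>. \<chi> i. Z i \<omega>) -` B \<inter> space P = W -` (g -` B) \<inter> space P" unfolding VZ by auto
    have e1: "W1 -` (g -` B) \<inter> space P = (\<lambda>\<omega>. \<chi> i. X i \<omega>) -` B \<inter> space P"
      using ge unfolding W1_def VX_def by auto
    have e2: "W2 -` (g -` B) \<inter> space P = (\<lambda>\<omega>. \<chi> i. Y i \<omega>) -` B \<inter> space P"
      using ge unfolding W2_def VY_def by auto
    show ?thesis unfolding e0 mix[OF C] e1 e2 ..
  qed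
  then show ?thesis using Zm by blast
qed

lemma agg_perm:
  fixes f :: "real^'n \<Rightarrow> real"
  assumes sym: "symmetric_fun f" and bij: "bij \<pi>"
  shows "agg_set P f F \<subseteq> agg_set P f (\<lambda>i. F (\<pi> i))"
proof
  fix H assume "H \<in> agg_set P f F"
  then obtain X where H: "H = cdf (distr P borel (\<lambda>\<omega>. f (\<chi> i. X i \<omega>)))"
    and X: "\<forall>i. X i \<in> borel_measurable P \<and> cdf (distr P borel (X i)) = F i"
    unfolding agg_set_def by blast
  define Y where "Y i = X (\<pi> i)" for i
  have fe: "(\<lambda>\<omega>. f (\<chi> i. Y i \<omega>)) = (\<lambda>\<omega>. f (\<chi> i. X i \<omega>))"
  proof
    fix \<omega>
    have "f (\<chi> i. (\<chi> j. X j \<omega>) $ \<pi> i) = f (\<chi> j. X j \<omega>)"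
      using sym bij unfolding symmetric_fun_def by blast
    then show "f (\<chi> i. Y i \<omega>) = f (\<chi> i. X i \<omega>)" unfolding Y_def by simp
  qed
  have "H = cdf (distr P borel (\<lambda>\<omega>. f (\<chi> i. Y i \<omega>)))
     \<and> (\<forall>i. Y i \<in> borel_measurable P \<and> cdf (distr P borel (Y i)) = F (\<pi> i))"
    using H X fe unfolding Y_def by simp
  then show "H \<in> agg_set P f (\<lambda>i. F (\<pi> i))" unfolding agg_set_def by blast
qed

lemma mix_sub:
  fixes P :: "'a measure" and f :: "real^'n \<Rightarrow> real"
  assumes ps: "prob_space P" and at: "atomless P" and fm: "f \<in> borel_measurable borel"
    and l: "0 \<le> l" "l \<le> 1"
  shows "mix_set l (agg_set P f F) (agg_set P f G) \<subseteq> agg_set P f (mix_tuple l F G)"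
proof
  interpret prob_space P by (rule ps)
  fix H assume "H \<in> mix_set l (agg_set P f F) (agg_set P f G)"
  then obtain H1 H2 where H: "H = (\<lambda>x. l * H1 x + (1-l) * H2 x)"
    and H1: "H1 \<in> agg_set P f F" and H2: "H2 \<in> agg_set P f G"
    unfolding mix_set_def by blast
  obtain X where H1e: "H1 = cdf (distr P borel (\<lambda>\<omega>. f (\<chi> i. X i \<omega>)))"
    and X: "\<forall>i. X i \<in> borel_measurable P \<and> cdf (distr P borel (X i)) = F i"
    using H1 unfolding agg_set_def by blast
  obtain Y where H2e: "H2 = cdf (distr P borel (\<lambda>\<omega>. f (\<chi> i. Y i \<omega>)))"
    and Y: "\<forall>i. Y i \<in> borel_measurable P \<and> cdf (distr P borel (Y i)) = G i"
    using H2 unfolding agg_set_def by blast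
  have Xm[measurable]: "X i \<in> borel_measurable P" for i using X by blast
  have Ym[measurable]: "Y i \<in> borel_measurable P" for i using Y by blast
  have "\<exists>Z. (\<forall>i. Z i \<in> borel_measurable P) \<and> (\<forall>B\<in>sets (borel :: (real^'n) measure).
     measure P ((\<lambda>\<omega>. \<chi> i. Z i \<omega>) -` B \<inter> space P)
       = l * measure P ((\<lambda>\<omega>. \<chi> i. X i \<omega>) -` B \<inter> space P)
         + (1-l) * measure P ((\<lambda>\<omega>. \<chi> i. Y i \<omega>) -` B \<inter> space P))"
    by (rule mix_realize[OF ps at]) (use Xm Ym l in auto)
  then obtain Z where Zm: "\<forall>i. Z i \<in> borel_measurable P" and Zmix: "\<forall>B\<in>sets (borel :: (real^'n) measure).
     measure P ((\<lambda>\<omega>. \<chi> i. Z i \<omega>) -` B \<inter> space P)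
       = l * measure P ((\<lambda>\<omega>. \<chi> i. X i \<omega>) -` B \<inter> space P)
         + (1-l) * measure P ((\<lambda>\<omega>. \<chi> i. Y i \<omega>) -` B \<inter> space P)"
    by blast
  have Zm'[measurable]: "Z i \<in> borel_measurable P" for i using Zm by blast
  have VXm[measurable]: "(\<lambda>\<omega>. \<chi> i. X i \<omega>) \<in> borel_measurable P" by (rule measurable_vecI) simp
  have VYm[measurable]: "(\<lambda>\<omega>. \<chi> i. Y i \<omega>) \<in> borel_measurable P" by (rule measurable_vecI) simp
  have VZm[measurable]: "(\<lambda>\<omega>. \<chi> i. Z i \<omega>) \<in> borel_measurable P" by (rule measurable_vecI) simp
  have pre: "{\<omega>\<in>space P. h (V \<omega>) \<le> x} = V -` {v. h v \<le> x} \<inter> space P" for h :: "real^'n \<Rightarrow> real" and V x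
    by auto
  have comp: "cdf (distr P borel (Z i)) = mix_tuple l F G i" for i
  proof
    fix x
    have B: "{v::real^'n. v $ i \<le> x} \<in> sets borel" by measurable
    have "cdf (distr P borel (Z i)) x = measure P {\<omega>\<in>space P. (\<chi> i. Z i \<omega>) $ i \<le> x}"
      by (simp add: cdf_distr_eq[OF ps])
    also have "\<dots> = l * measure P {\<omega>\<in>space P. (\<chi> i. X i \<omega>) $ i \<le> x}
         + (1-l) * measure P {\<omega>\<in>space P. (\<chi> i. Y i \<omega>) $ i \<le> x}"
      unfolding pre[of "\<lambda>v. v $ i"] using Zmix B by blast
    also have "\<dots> = mix_tuple l F G i x"
      using X Y by (simp add: mix_tuple_def cdf_distr_eq[OF ps, symmetric])
    finally show "cdf (distr P borel (Z i)) x = mix_tuple l F G i x" .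
  qed
  have fH: "H = cdf (distr P borel (\<lambda>\<omega>. f (\<chi> i. Z i \<omega>)))"
  proof
    fix x
    have B: "{v::real^'n. f v \<le> x} \<in> sets borel" using fm by measurable
    have "cdf (distr P borel (\<lambda>\<omega>. f (\<chi> i. Z i \<omega>))) x = measure P {\<omega>\<in>space P. f (\<chi> i. Z i \<omega>) \<le> x}"
      using fm by (simp add: cdf_distr_eq[OF ps])
    also have "\<dots> = l * measure P {\<omega>\<in>space P. f (\<chi> i. X i \<omega>) \<le> x}
         + (1-l) * measure P {\<omega>\<in>space P. f (\<chi> i. Y i \<omega>) \<le> x}"
      unfolding pre[of f] using Zmix B by blast
    also have "\<dots> = H x"
      using fm unfolding H H1e H2e by (simp add: cdf_distr_eq[OF ps])
    finally show "H x = cdf (distr P borel (\<lambda>\<omega>. f (\<chi> i. Z i \<omega>))) x" by simp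
  qed
  show "H \<in> agg_set P f (mix_tuple l F G)"
    unfolding agg_set_def using fH comp Zm by blast
qed

theorem lemma1:
  fixes P :: "'a measure" and f :: "real^'n \<Rightarrow> real"
    and F G :: "'n \<Rightarrow> real \<Rightarrow> real" and l :: real and \<pi> :: "'n \<Rightarrow> 'n"
  assumes "prob_space P" and "atomless P"
    and "f \<in> borel_measurable borel" and "symmetric_fun f"
    and "\<forall>i. is_cdf (F i)" and "\<forall>i. is_cdf (G i)"
    and "0 \<le> l" and "l \<le> 1" and "bij \<pi>"
  shows "agg_set P f F = agg_set P f (\<lambda>i. F (\<pi> i))
    \<and> mix_set l (agg_set P f F) (agg_set P f G) \<subseteq> agg_set P f (mix_tuple l F G)
    \<and> mix_set l (agg_set P f F) (agg_set P f F) = agg_set P f F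
    \<and> agg_set P f F \<inter> agg_set P f G \<subseteq> agg_set P f (mix_tuple l F G)"
proof (intro conjI)
  show "agg_set P f F = agg_set P f (\<lambda>i. F (\<pi> i))"
  proof
    show "agg_set P f F \<subseteq> agg_set P f (\<lambda>i. F (\<pi> i))" by (rule agg_perm[OF assms(4,9)])
    have "agg_set P f (\<lambda>i. F (\<pi> i)) \<subseteq> agg_set P f (\<lambda>i. F (\<pi> (inv \<pi> i)))"
      by (rule agg_perm[OF assms(4) bij_imp_bij_inv[OF assms(9)]])
    also have "(\<lambda>i. F (\<pi> (inv \<pi> i))) = F"
      using assms(9) by (simp add: bij_is_surj surj_f_inv_f)
    finally show "agg_set P f (\<lambda>i. F (\<pi> i)) \<subseteq> agg_set P f F" .
  qed
  show sub: "mix_set l (agg_set P f F) (agg_set P f G) \<subseteq> agg_set P f (mix_tuple l F G)"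
    by (rule mix_sub[OF assms(1,2,3,7,8)])
  have mt: "mix_tuple l F F = F" by (simp add: mix_tuple_def algebra_simps)
  have self: "H \<in> mix_set l A B" if "H \<in> A" "H \<in> B" for H A B
  proof -
    have "H = (\<lambda>x. l * H x + (1-l) * H x)" by (simp add: algebra_simps)
    then show ?thesis unfolding mix_set_def using that by blast
  qed
  show "mix_set l (agg_set P f F) (agg_set P f F) = agg_set P f F"
  proof
    show "mix_set l (agg_set P f F) (agg_set P f F) \<subseteq> agg_set P f F"
      using mix_sub[OF assms(1,2,3,7,8), of F F] mt by simp
    show "agg_set P f F \<subseteq> mix_set l (agg_set P f F) (agg_set P f F)"
      using self by blast
  qed
  show "agg_set P f F \<inter> agg_set P f G \<subseteq> agg_set P f (mix_tuple l F G)"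
    using self sub by blast
qed

end
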